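(* Let $G=(V,E)$ be a finite graph (parallel edges and loops allowed) and $e\neq f$ edges of $G$, and let $E^{ef}=E\setminus\{e,f\}$. The coefficient of the monomial $\prod_{g\in E^{ef}}x_g$ in $\mathcal{M}_{ef}(1)$ equals the number of paracels $F\subseteq E^{ef}$ of $G$.
   Context: Let $\{x_g : g\in E\}$ be variables. For $F\subseteq E$, $\mathbf{x}^F=\prod_{g\in F}x_g$ and $k(F)$ is the number of connected components of $(V,F)$. For $A,B\subseteq E$, $\mathcal{T}_A^B=\sum_{F\subseteq E:\,A\subseteq F,\,F\cap B=\varnothing}\mathbf{x}^F q^{k(F)}$; $\mathcal{T}_e^f=\mathcal{T}_{\{e\}}^{\{f\}}$, $\mathcal{T}_f^e=\mathcal{T}_{\{f\}}^{\{e\}}$, $\mathcal{T}_{ef}=\mathcal{T}_{\{e,f\}}^{\varnothing}$, $\mathcal{T}^{ef}=\mathcal{T}_{\varnothing}^{\{e,f\}}$, and $\mathcal{M}_{ef}(q)=(\mathcal{T}_e^f\mathcal{T}_f^e-\mathcal{T}_{ef}\mathcal{T}^{ef})/(x_ex_f(1-q))$, which is a polynomial; $\mathcal{M}_{ef}(1)$ is its value at $q=1$. A subset $F\subseteq E^{ef}$ is a paracel if $e$ and $f$ both join the same two distinct connected components of $(V,F)$; equivalently $(V,F+e)$ and $(V,F+f)$ have the same connected components and $k(F+e)=k(F+f)=k(F)-1$. *)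

theory Defs
  imports Main "HOL-Library.Poly_Mapping" "HOL-Computational_Algebra.Polynomial"
begin

(* A finite multigraph: vertex set V, edge set E, and each edge g has endpoints
   ends g = (u, v) (loops: u = v; parallel edges: distinct edges with equal ends). *)

definition conn :: "'v set \<Rightarrow> ('e \<Rightarrow> 'v \<times> 'v) \<Rightarrow> 'e set \<Rightarrow> ('v \<times> 'v) set" where
  "conn V ends F = Restr ((ends ` F \<union> (prod.swap \<circ> ends) ` F)\<^sup>*) V"

definition ncomp :: "'v set \<Rightarrow> ('e \<Rightarrow> 'v \<times> 'v) \<Rightarrow> 'e set \<Rightarrow> nat" where
  "ncomp V ends F = card (V // conn V ends F)"

definition comp :: "'v set \<Rightarrow> ('e \<Rightarrow> 'v \<times> 'v) \<Rightarrow> 'e set \<Rightarrow> 'v \<Rightarrow> 'v set" where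
  "comp V ends F u = conn V ends F `` {u}"

(* Polynomials in the edge variables x_g with coefficients in Z[q]:
   a monomial is an exponent vector 'e \<Rightarrow>\<^sub>0 nat. *)
type_synonym 'e xpoly = "('e \<Rightarrow>\<^sub>0 nat) \<Rightarrow>\<^sub>0 int poly"

definition mexp :: "'e set \<Rightarrow> 'e \<Rightarrow>\<^sub>0 nat" where
  "mexp F = (\<Sum>g\<in>F. Poly_Mapping.single g 1)"

(* T_A^B = sum over F \<subseteq> E, A \<subseteq> F, F \<inter> B = {} of x^F q^{k(F)} *)
definition Tpoly :: "'v set \<Rightarrow> 'e set \<Rightarrow> ('e \<Rightarrow> 'v \<times> 'v) \<Rightarrow> 'e set \<Rightarrow> 'e set \<Rightarrow> 'e xpoly" where
  "Tpoly V E ends A B =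
     (\<Sum>F\<in>{F. F \<subseteq> E \<and> A \<subseteq> F \<and> F \<inter> B = {}}.
        Poly_Mapping.single (mexp F) ([:0, 1:] ^ ncomp V ends F))"

(* M_ef(q) = (T_e^f T_f^e - T_ef T^ef) / (x_e x_f (1 - q)), the (unique) polynomial
   quotient *)
definition Mpoly :: "'v set \<Rightarrow> 'e set \<Rightarrow> ('e \<Rightarrow> 'v \<times> 'v) \<Rightarrow> 'e \<Rightarrow> 'e \<Rightarrow> 'e xpoly" where
  "Mpoly V E ends e f = (THE M.
     Poly_Mapping.single (mexp {e, f}) [:1, -1:] * M =
       Tpoly V E ends {e} {f} * Tpoly V E ends {f} {e}
       - Tpoly V E ends {e, f} {} * Tpoly V E ends {} {e, f})"

definition Mpoly_at1 :: "'v set \<Rightarrow> 'e set \<Rightarrow> ('e \<Rightarrow> 'v \<times> 'v) \<Rightarrow> 'e \<Rightarrow> 'e \<Rightarrow> ('e \<Rightarrow>\<^sub>0 nat) \<Rightarrow>\<^sub>0 int" where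
  "Mpoly_at1 V E ends e f = Poly_Mapping.map (\<lambda>p. poly p 1) (Mpoly V E ends e f)"

definition paracel :: "'v set \<Rightarrow> 'e set \<Rightarrow> ('e \<Rightarrow> 'v \<times> 'v) \<Rightarrow> 'e \<Rightarrow> 'e \<Rightarrow> 'e set \<Rightarrow> bool" where
  "paracel V E ends e f F \<longleftrightarrow> F \<subseteq> E - {e, f} \<and>
     comp V ends F (fst (ends e)) \<noteq> comp V ends F (snd (ends e)) \<and>
     {comp V ends F (fst (ends e)), comp V ends F (snd (ends e))} =
     {comp V ends F (fst (ends f)), comp V ends F (snd (ends f))}"

end

theory Submission
  imports Defs
begin


lemma lookup_map0: "f 0 = 0 \<Longrightarrow> Poly_Mapping.lookup (Poly_Mapping.map f p) k = f (Poly_Mapping.lookup p k)"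
  by transfer (auto simp: when_def)

lemma lookup_single_mult:
  fixes c :: "'b::comm_semiring_1" and m k :: "'a::cancel_comm_monoid_add"
  shows "Poly_Mapping.lookup (Poly_Mapping.single m c * p) (m + k) = c * Poly_Mapping.lookup p k"
proof -
  have "Poly_Mapping.lookup (Poly_Mapping.single m c * p) (m + k) =
     (\<Sum>l. Poly_Mapping.lookup (Poly_Mapping.single m c) l * (\<Sum>q. Poly_Mapping.lookup p q when m + k = l + q))"
    by (rule lookup_mult)
  also have "\<dots> = (\<Sum>l. if m = l then c * (\<Sum>q. Poly_Mapping.lookup p q when m + k = l + q) else 0)"
    by (rule Sum_any.cong) (simp add: lookup_single when_def)
  also have "\<dots> = c * (\<Sum>q. Poly_Mapping.lookup p q when m + k = m + q)"
    by (simp only: Sum_any.delta')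
  also have "\<dots> = c * Poly_Mapping.lookup p k"
    by (simp add: when_def)
  finally show ?thesis .
qed

lemma single_mult_cancel:
  fixes c :: "'b::idom" and m :: "'a::cancel_comm_monoid_add"
  assumes "c \<noteq> 0" "Poly_Mapping.single m c * p = Poly_Mapping.single m c * r"
  shows "p = r"
proof (rule poly_mapping_eqI)
  fix k
  have "c * Poly_Mapping.lookup p k = c * Poly_Mapping.lookup r k"
    using lookup_single_mult[of m c p k] lookup_single_mult[of m c r k] assms(2) by metis
  then show "Poly_Mapping.lookup p k = Poly_Mapping.lookup r k" using assms(1) mult_left_cancel by metis
qed



lemma merge_class:
  assumes eq: "equiv V r" and uv: "u \<in> V" "v \<in> V" "(u, v) \<notin> r"
    and r': "r' = r \<union> {(x,y). (x,u)\<in>r \<and> (v,y)\<in>r} \<union> {(x,y). (x,v)\<in>r \<and> (u,y)\<in>r}"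
    and x: "x \<in> V"
  shows "r' `` {x} = (if x \<in> r``{u} \<union> r``{v} then r``{u} \<union> r``{v} else r``{x})"
proof -
  have s: "\<And>a b. (a,b)\<in>r \<Longrightarrow> (b,a)\<in>r" using eq unfolding equiv_def by (meson symE)
  have t: "\<And>a b c. (a,b)\<in>r \<Longrightarrow> (b,c)\<in>r \<Longrightarrow> (a,c)\<in>r" using eq unfolding equiv_def by (meson transE)
  have mem: "\<And>y. y \<in> r'``{x} \<longleftrightarrow> (x,y)\<in>r \<or> ((x,u)\<in>r \<and> (v,y)\<in>r) \<or> ((x,v)\<in>r \<and> (u,y)\<in>r)"
    unfolding r' by blast
  show ?thesis
  proof (cases "(u,x) \<in> r")
    case True
    then have xu: "(x,u) \<in> r" using s by blast
    have xv: "(x,v) \<notin> r" using t[OF True] uv(3) by blast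
    have "\<And>y. (x,y)\<in>r \<longleftrightarrow> (u,y)\<in>r" using t True xu by blast
    then show ?thesis using mem xu xv True by auto
  next
    case nu: False
    show ?thesis
    proof (cases "(v,x) \<in> r")
      case True
      then have xv: "(x,v) \<in> r" using s by blast
      have xu: "(x,u) \<notin> r" using t[OF True] uv(3) s by blast
      have "\<And>y. (x,y)\<in>r \<longleftrightarrow> (v,y)\<in>r" using t True xv by blast
      then show ?thesis using mem xu xv True by auto
    next
      case False
      then have "(x,u) \<notin> r" "(x,v) \<notin> r" using nu s by blast+
      then show ?thesis using mem nu False by auto
    qed
  qed
qed

lemma merge_card:
  assumes fin: "finite V" and eq: "equiv V r" and uv: "u \<in> V" "v \<in> V" "(u, v) \<notin> r"
    and r': "r' = r \<union> {(x,y). (x,u)\<in>r \<and> (v,y)\<in>r} \<union> {(x,y). (x,v)\<in>r \<and> (u,y)\<in>r}"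
  shows "card (V // r') + 1 = card (V // r)"
proof -
  let ?A = "r``{u}" and ?B = "r``{v}"
  have q: "V // r' = insert (?A \<union> ?B) (V // r - {?A, ?B})"
  proof
    show "V // r' \<subseteq> insert (?A \<union> ?B) (V // r - {?A, ?B})"
    proof
      fix C assume "C \<in> V // r'"
      then obtain x where x: "x \<in> V" "C = r'``{x}" by (auto elim: quotientE)
      show "C \<in> insert (?A \<union> ?B) (V // r - {?A, ?B})"
      proof (cases "x \<in> ?A \<union> ?B")
        case True then show ?thesis using merge_class[OF eq uv r' x(1)] x by simp
      next
        case False
        then have "C = r``{x}" using merge_class[OF eq uv r' x(1)] x by simp
        moreover have "r``{x} \<noteq> ?A" "r``{x} \<noteq> ?B" using False equiv_class_self[OF eq x(1)] by auto
        ultimately show ?thesis using x by (auto intro: quotientI)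
      qed
    qed
  next
    show "insert (?A \<union> ?B) (V // r - {?A, ?B}) \<subseteq> V // r'"
    proof
      fix C assume C: "C \<in> insert (?A \<union> ?B) (V // r - {?A, ?B})"
      show "C \<in> V // r'"
      proof (cases "C = ?A \<union> ?B")
        case True
        have "u \<in> ?A" by (rule equiv_class_self[OF eq uv(1)])
        then have "r'``{u} = C" using merge_class[OF eq uv r' uv(1)] True by simp
        then show ?thesis using uv by (metis quotientI)
      next
        case False
        from C False have C': "C \<in> V // r" "C \<noteq> ?A" "C \<noteq> ?B" by auto
        then obtain x0 where "x0 \<in> V" "C = r``{x0}" by (auto elim: quotientE)
        with C' have x: "x0 \<in> V" "C = r``{x0}" "C \<noteq> ?A" "C \<noteq> ?B" by auto
        have "x0 \<notin> ?A \<union> ?B"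
        proof
          assume "x0 \<in> ?A \<union> ?B"
          then have "r``{u} = r``{x0} \<or> r``{v} = r``{x0}" using equiv_class_eq[OF eq] by blast
          then show False using x by auto
        qed
        then have "r'``{x0} = C" using merge_class[OF eq uv r' x(1)] x by simp
        then show ?thesis using x by (metis quotientI)
      qed
    qed
  qed
  have fq: "finite (V // r)" using fin by (rule finite_quotient) (use eq in \<open>auto simp: equiv_def refl_on_def\<close>)
  have AB: "?A \<in> V // r" "?B \<in> V // r" using uv by (auto intro: quotientI)
  have ne: "?A \<noteq> ?B" using uv by (simp add: equiv_class_eq_iff[OF eq])
  have notin: "?A \<union> ?B \<notin> V // r - {?A, ?B}"
  proof
    assume "?A \<union> ?B \<in> V // r - {?A, ?B}"
    then have "?A \<union> ?B \<in> V // r" "?A \<union> ?B \<noteq> ?A" by auto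
    then have "(?A \<union> ?B) \<inter> ?A = {}" using quotient_disj[OF eq] AB(1) by metis
    moreover have "u \<in> ?A" by (rule equiv_class_self[OF eq uv(1)])
    ultimately show False by auto
  qed
  have "card (V // r') = card (V // r - {?A, ?B}) + 1"
    unfolding q using fq notin by simp
  also have "card (V // r - {?A, ?B}) = card (V // r) - 2"
    using fq AB ne by (simp add: card_Diff_subset)
  moreover have "card {?A, ?B} \<le> card (V // r)" using fq AB by (intro card_mono) auto
  moreover have "card {?A, ?B} = 2" using ne by simp
  ultimately show ?thesis by linarith
qed



definition rel :: "('e \<Rightarrow> 'v \<times> 'v) \<Rightarrow> 'e set \<Rightarrow> ('v \<times> 'v) set" where
  "rel ends F = ends ` F \<union> (prod.swap \<circ> ends) ` F"

lemma conn_rel: "conn V ends F = Restr ((rel ends F)\<^sup>*) V"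
  unfolding conn_def rel_def by simp

lemma sym_rel: "sym (rel ends F)"
proof (rule symI)
  fix a b assume "(a,b) \<in> rel ends F"
  then consider g where "g \<in> F" "(a,b) = ends g" | g where "g \<in> F" "(a,b) = prod.swap (ends g)"
    unfolding rel_def by auto
  then show "(b,a) \<in> rel ends F"
  proof cases
    case 1
    then have "(b,a) = prod.swap (ends g)" by (metis prod.swap_def fst_conv snd_conv)
    then show ?thesis using 1 unfolding rel_def by auto
  next
    case 2
    then have "(b,a) = ends g" by (metis prod.swap_def fst_conv snd_conv prod.collapse)
    then show ?thesis using 2 unfolding rel_def by auto
  qed
qed

lemma conn_equiv: "equiv V (conn V ends F)"
proof -
  have "sym ((rel ends F)\<^sup>*)" using sym_rel by (rule sym_rtrancl)
  then have s: "\<And>a b. (a,b) \<in> (rel ends F)\<^sup>* \<Longrightarrow> (b,a) \<in> (rel ends F)\<^sup>*" by (meson symD)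
  show ?thesis unfolding conn_rel
  proof (rule equivI)
    show "refl_on V (Restr ((rel ends F)\<^sup>*) V)" unfolding refl_on_def by auto
    show "Restr ((rel ends F)\<^sup>*) V \<subseteq> V \<times> V" by auto
    show "sym (Restr ((rel ends F)\<^sup>*) V)"
    proof (rule symI)
      fix a b assume "(a,b) \<in> Restr ((rel ends F)\<^sup>*) V"
      then show "(b,a) \<in> Restr ((rel ends F)\<^sup>*) V" using s[of a b] by simp
    qed
    show "trans (Restr ((rel ends F)\<^sup>*) V)"
    proof (rule transI)
      fix a b c assume "(a,b) \<in> Restr ((rel ends F)\<^sup>*) V" "(b,c) \<in> Restr ((rel ends F)\<^sup>*) V"
      then show "(a,c) \<in> Restr ((rel ends F)\<^sup>*) V" using rtrancl_trans[of a b "rel ends F" c] by simp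
    qed
  qed
qed

lemma rel_insert: "rel ends (insert g F) = insert (fst (ends g), snd (ends g)) (insert (snd (ends g), fst (ends g)) (rel ends F))"
  unfolding rel_def by (auto simp: prod.swap_def)

lemma rtrancl_insert2:
  assumes "sym R"
  shows "(insert (u,v) (insert (v,u) R))\<^sup>* = R\<^sup>* \<union> {(x,y). (x,u)\<in>R\<^sup>* \<and> (v,y)\<in>R\<^sup>*} \<union> {(x,y). (x,v)\<in>R\<^sup>* \<and> (u,y)\<in>R\<^sup>*}"
proof -
  let ?S = "R\<^sup>*"
  have t: "\<And>a b c. (a,b)\<in>?S \<Longrightarrow> (b,c)\<in>?S \<Longrightarrow> (a,c)\<in>?S" by (rule rtrancl_trans)
  have "(insert (u,v) (insert (v,u) R))\<^sup>* = (insert (v,u) R)\<^sup>* \<union> {(x,y). (x,u)\<in>(insert (v,u) R)\<^sup>* \<and> (v,y)\<in>(insert (v,u) R)\<^sup>*}"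
    by (rule rtrancl_insert)
  also have "(insert (v,u) R)\<^sup>* = ?S \<union> {(x,y). (x,v)\<in>?S \<and> (u,y)\<in>?S}"
    by (rule rtrancl_insert)
  finally have eq: "(insert (u,v) (insert (v,u) R))\<^sup>* = ?S \<union> {(x,y). (x,v)\<in>?S \<and> (u,y)\<in>?S} \<union>
     {(x,y). ((x,u)\<in>?S \<or> (x,v)\<in>?S) \<and> ((v,y)\<in>?S \<or> (u,y)\<in>?S)}" by auto
  show ?thesis unfolding eq
  proof (intro set_eqI iffI)
    fix p assume "p \<in> ?S \<union> {(x,y). (x,v)\<in>?S \<and> (u,y)\<in>?S} \<union>
     {(x,y). ((x,u)\<in>?S \<or> (x,v)\<in>?S) \<and> ((v,y)\<in>?S \<or> (u,y)\<in>?S)}"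
    moreover obtain x y where p: "p = (x,y)" by (cases p)
    ultimately have
      "(x,y) \<in> ?S \<or> ((x,v)\<in>?S \<and> (u,y)\<in>?S) \<or> (((x,u)\<in>?S \<or> (x,v)\<in>?S) \<and> ((v,y)\<in>?S \<or> (u,y)\<in>?S))"
      by auto
    then have "(x,y) \<in> ?S \<or> ((x,u)\<in>?S \<and> (v,y)\<in>?S) \<or> ((x,v)\<in>?S \<and> (u,y)\<in>?S)"
      using t by metis
    then show "p \<in> ?S \<union> {(x,y). (x,u)\<in>?S \<and> (v,y)\<in>?S} \<union> {(x,y). (x,v)\<in>?S \<and> (u,y)\<in>?S}"
      using p by auto
  qed auto
qed

lemma conn_insert:
  assumes "fst (ends g) \<in> V" "snd (ends g) \<in> V"
  shows "conn V ends (insert g F) = conn V ends F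
     \<union> {(x,y). (x, fst (ends g)) \<in> conn V ends F \<and> (snd (ends g), y) \<in> conn V ends F}
     \<union> {(x,y). (x, snd (ends g)) \<in> conn V ends F \<and> (fst (ends g), y) \<in> conn V ends F}"
  unfolding conn_rel rel_insert rtrancl_insert2[OF sym_rel] using assms by auto

lemma conn_same:
  assumes "fst (ends g) \<in> V" "snd (ends g) \<in> V" "(fst (ends g), snd (ends g)) \<in> conn V ends F"
  shows "conn V ends (insert g F) = conn V ends F"
proof -
  have e: "equiv V (conn V ends F)" by (rule conn_equiv)
  have s: "\<And>a b. (a,b)\<in>conn V ends F \<Longrightarrow> (b,a)\<in>conn V ends F" using e unfolding equiv_def by (meson symE)
  have t: "\<And>a b c. (a,b)\<in>conn V ends F \<Longrightarrow> (b,c)\<in>conn V ends F \<Longrightarrow> (a,c)\<in>conn V ends F" using e unfolding equiv_def by (meson transE)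
  let ?c = "conn V ends F" and ?u = "fst (ends g)" and ?v = "snd (ends g)"
  have 1: "{(x,y). (x, ?u) \<in> ?c \<and> (?v, y) \<in> ?c} \<subseteq> ?c"
  proof (clarify)
    fix x y assume "(x, ?u) \<in> ?c" "(?v, y) \<in> ?c"
    then show "(x,y) \<in> ?c" using t[OF t[OF \<open>(x, ?u) \<in> ?c\<close> assms(3)]] by blast
  qed
  have 2: "{(x,y). (x, ?v) \<in> ?c \<and> (?u, y) \<in> ?c} \<subseteq> ?c"
  proof (clarify)
    fix x y assume "(x, ?v) \<in> ?c" "(?u, y) \<in> ?c"
    then show "(x,y) \<in> ?c" using t[OF t[OF \<open>(x, ?v) \<in> ?c\<close> s[OF assms(3)]]] by blast
  qed
  show ?thesis unfolding conn_insert[of ends g V F, OF assms(1,2)] using 1 2 by blast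
qed

lemma ncomp_same:
  assumes "fst (ends g) \<in> V" "snd (ends g) \<in> V" "(fst (ends g), snd (ends g)) \<in> conn V ends F"
  shows "ncomp V ends (insert g F) = ncomp V ends F"
  unfolding ncomp_def conn_same[OF assms] ..

lemma ncomp_drop:
  assumes "finite V" "fst (ends g) \<in> V" "snd (ends g) \<in> V" "(fst (ends g), snd (ends g)) \<notin> conn V ends F"
  shows "ncomp V ends (insert g F) + 1 = ncomp V ends F"
  unfolding ncomp_def by (rule merge_card[OF assms(1) conn_equiv assms(2-4) conn_insert[of ends g V F, OF assms(2,3)]])

lemma conn_mono: "F \<subseteq> F' \<Longrightarrow> conn V ends F \<subseteq> conn V ends F'"
  unfolding conn_rel rel_def by (intro Int_mono rtrancl_mono) auto

lemma comp_eq: "x \<in> V \<Longrightarrow> y \<in> V \<Longrightarrow> comp V ends F x = comp V ends F y \<longleftrightarrow> (x,y) \<in> conn V ends F"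
  unfolding comp_def using equiv_class_eq_iff[OF conn_equiv, of x y V ends F] by simp



lemma paracel_iff:
  assumes V: "fst (ends e) \<in> V" "snd (ends e) \<in> V" "fst (ends f) \<in> V" "snd (ends f) \<in> V"
    and H: "H \<subseteq> E - {e, f}"
  shows "paracel V E ends e f H \<longleftrightarrow>
    (fst (ends f), snd (ends f)) \<notin> conn V ends H \<and> (fst (ends f), snd (ends f)) \<in> conn V ends (insert e H)"
proof -
  let ?c = "conn V ends H"
  obtain ue ve uf vf where ends: "ends e = (ue, ve)" "ends f = (uf, vf)" by (metis prod.collapse)
  have Vs: "ue \<in> V" "ve \<in> V" "uf \<in> V" "vf \<in> V" using V ends by auto
  have e: "equiv V ?c" by (rule conn_equiv)
  have s: "\<And>a b. (a,b)\<in>?c \<Longrightarrow> (b,a)\<in>?c" using e unfolding equiv_def by (meson symE)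
  have t: "\<And>a b c. (a,b)\<in>?c \<Longrightarrow> (b,c)\<in>?c \<Longrightarrow> (a,c)\<in>?c" using e unfolding equiv_def by (meson transE)
  have ce: "(uf, vf) \<in> conn V ends (insert e H) \<longleftrightarrow>
     (uf, vf) \<in> ?c \<or> ((uf, ue) \<in> ?c \<and> (ve, vf) \<in> ?c) \<or> ((uf, ve) \<in> ?c \<and> (ue, vf) \<in> ?c)"
    using conn_insert[of ends e V H] V ends by auto
  have p: "paracel V E ends e f H \<longleftrightarrow> (ue, ve) \<notin> ?c \<and>
     (((ue, uf) \<in> ?c \<and> (ve, vf) \<in> ?c) \<or> ((ue, vf) \<in> ?c \<and> (ve, uf) \<in> ?c))"
    unfolding paracel_def using H ends comp_eq[OF Vs(1) Vs(2), of ends H] comp_eq[OF Vs(1) Vs(3), of ends H]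
      comp_eq[OF Vs(1) Vs(4), of ends H] comp_eq[OF Vs(2) Vs(3), of ends H] comp_eq[OF Vs(2) Vs(4), of ends H]
    by (auto simp: doubleton_eq_iff)
  have main: "((ue, ve) \<notin> ?c \<and> ((ue, uf) \<in> ?c \<and> (ve, vf) \<in> ?c \<or> (ue, vf) \<in> ?c \<and> (ve, uf) \<in> ?c))
    \<longleftrightarrow> ((uf, vf) \<notin> ?c \<and> ((uf, ue) \<in> ?c \<and> (ve, vf) \<in> ?c \<or> (uf, ve) \<in> ?c \<and> (ue, vf) \<in> ?c))"
  proof (intro iffI)
    assume a: "(ue, ve) \<notin> ?c \<and> ((ue, uf) \<in> ?c \<and> (ve, vf) \<in> ?c \<or> (ue, vf) \<in> ?c \<and> (ve, uf) \<in> ?c)"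
    then show "(uf, vf) \<notin> ?c \<and> ((uf, ue) \<in> ?c \<and> (ve, vf) \<in> ?c \<or> (uf, ve) \<in> ?c \<and> (ue, vf) \<in> ?c)"
    proof (elim conjE disjE)
      assume h: "(ue, ve) \<notin> ?c" "(ue, uf) \<in> ?c" "(ve, vf) \<in> ?c"
      have "(uf, vf) \<notin> ?c"
      proof
        assume "(uf, vf) \<in> ?c"
        then have "(ue, ve) \<in> ?c" using t[OF t[OF h(2)] s[OF h(3)]] by blast
        with h(1) show False by blast
      qed
      then show ?thesis using h s by blast
    next
      assume h: "(ue, ve) \<notin> ?c" "(ue, vf) \<in> ?c" "(ve, uf) \<in> ?c"
      have "(uf, vf) \<notin> ?c"
      proof
        assume "(uf, vf) \<in> ?c"
        then have "(ve, ue) \<in> ?c" using t[OF t[OF h(3)] s[OF h(2)]] by blast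
        with h(1) s show False by blast
      qed
      then show ?thesis using h s by blast
    qed
  next
    assume a: "(uf, vf) \<notin> ?c \<and> ((uf, ue) \<in> ?c \<and> (ve, vf) \<in> ?c \<or> (uf, ve) \<in> ?c \<and> (ue, vf) \<in> ?c)"
    then show "(ue, ve) \<notin> ?c \<and> ((ue, uf) \<in> ?c \<and> (ve, vf) \<in> ?c \<or> (ue, vf) \<in> ?c \<and> (ve, uf) \<in> ?c)"
    proof (elim conjE disjE)
      assume h: "(uf, vf) \<notin> ?c" "(uf, ue) \<in> ?c" "(ve, vf) \<in> ?c"
      have "(ue, ve) \<notin> ?c"
      proof
        assume "(ue, ve) \<in> ?c"
        then have "(uf, vf) \<in> ?c" using t[OF t[OF h(2)] h(3)] by blast
        with h(1) show False by blast
      qed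
      then show ?thesis using h s by blast
    next
      assume h: "(uf, vf) \<notin> ?c" "(uf, ve) \<in> ?c" "(ue, vf) \<in> ?c"
      have "(ue, ve) \<notin> ?c"
      proof
        assume "(ue, ve) \<in> ?c"
        then have "(uf, vf) \<in> ?c" using t[OF t[OF h(2) s] h(3)] by blast
        with h(1) show False by blast
      qed
      then show ?thesis using h s by blast
    qed
  qed
  show ?thesis unfolding p using main ce ends by simp blast
qed

lemma paracel_term:
  assumes fin: "finite V"
    and V: "fst (ends e) \<in> V" "snd (ends e) \<in> V" "fst (ends f) \<in> V" "snd (ends f) \<in> V"
    and H: "H \<subseteq> E - {e, f}"
  shows "int (ncomp V ends H) - int (ncomp V ends (insert f H)) - int (ncomp V ends (insert e H))
       + int (ncomp V ends (insert e (insert f H))) = (if paracel V E ends e f H then 1 else 0)"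
proof -
  have com: "insert e (insert f H) = insert f (insert e H)" by blast
  have mono: "conn V ends H \<subseteq> conn V ends (insert e H)" by (rule conn_mono) blast
  show ?thesis
  proof (cases "(fst (ends f), snd (ends f)) \<in> conn V ends H")
    case True
    then have "(fst (ends f), snd (ends f)) \<in> conn V ends (insert e H)" using mono by blast
    then show ?thesis unfolding com using paracel_iff[OF V H] True
        ncomp_same[OF V(3,4) True] ncomp_same[of ends f V "insert e H", OF V(3,4)] by simp
  next
    case nc: False
    show ?thesis
    proof (cases "(fst (ends f), snd (ends f)) \<in> conn V ends (insert e H)")
      case True
      then show ?thesis unfolding com using paracel_iff[OF V H] nc
        ncomp_drop[OF fin V(3,4) nc] ncomp_same[of ends f V "insert e H", OF V(3,4)] by simp
    next
      case False
      then show ?thesis unfolding com using paracel_iff[OF V H] nc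
        ncomp_drop[OF fin V(3,4) nc] ncomp_drop[of V ends f "insert e H", OF fin V(3,4)] by simp
    qed
  qed
qed



lemma mexp_union: "finite A \<Longrightarrow> finite X \<Longrightarrow> A \<inter> X = {} \<Longrightarrow> mexp (X \<union> A) = mexp A + mexp X"
  unfolding mexp_def by (subst sum.union_disjoint) (auto simp: add.commute)

lemma lookup_mexp: "finite A \<Longrightarrow> Poly_Mapping.lookup (mexp A) g = (if g \<in> A then 1 else 0)"
  unfolding mexp_def by (simp add: lookup_sum lookup_single when_def)

lemma Tpoly_gen:
  assumes "finite E" "A \<subseteq> E" "A \<inter> B = {}"
  shows "Tpoly V E ends A B = (\<Sum>X\<in>Pow (E - (A \<union> B)).
     Poly_Mapping.single (mexp A + mexp X) ([:0, 1:] ^ ncomp V ends (X \<union> A)))"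
proof -
  have idx: "{F. F \<subseteq> E \<and> A \<subseteq> F \<and> F \<inter> B = {}} = (\<lambda>X. X \<union> A) ` Pow (E - (A \<union> B))"
  proof
    show "{F. F \<subseteq> E \<and> A \<subseteq> F \<and> F \<inter> B = {}} \<subseteq> (\<lambda>X. X \<union> A) ` Pow (E - (A \<union> B))"
    proof
      fix F assume "F \<in> {F. F \<subseteq> E \<and> A \<subseteq> F \<and> F \<inter> B = {}}"
      then have "F = (F - A) \<union> A" "F - A \<in> Pow (E - (A \<union> B))" by auto
      then show "F \<in> (\<lambda>X. X \<union> A) ` Pow (E - (A \<union> B))" by blast
    qed
  qed (use assms in auto)
  have inj: "inj_on (\<lambda>X. X \<union> A) (Pow (E - (A \<union> B)))"
    by (rule inj_onI) blast
  have fA: "finite A" using assms finite_subset by blast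
  show ?thesis unfolding Tpoly_def idx sum.reindex[OF inj] o_def
  proof (rule sum.cong[OF refl])
    fix X assume X: "X \<in> Pow (E - (A \<union> B))"
    then have "finite X" using assms(1) finite_subset by blast
    show "Poly_Mapping.single (mexp (X \<union> A)) ([:0, 1:] ^ ncomp V ends (X \<union> A)) =
         Poly_Mapping.single (mexp A + mexp X) ([:0, 1:] ^ ncomp V ends (X \<union> A))"
    proof -
      have "A \<inter> X = {}" using X by auto
      then show ?thesis using mexp_union[OF fA \<open>finite X\<close>] by simp
    qed
  qed
qed

definition hpoly :: "nat \<Rightarrow> nat \<Rightarrow> int poly" where
  "hpoly a b = (\<Sum>i<b. [:0,1:] ^ i) - (\<Sum>i<a. [:0,1:] ^ i)"

lemma geom_poly: "[:1, -1:] * (\<Sum>i<n. [:0,1:] ^ i) = (1 - [:0,1:] ^ n :: int poly)"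
proof (induction n)
  case 0 then show ?case by simp
next
  case (Suc n)
  have q: "[:1, -1:] = (1 - [:0,1:] :: int poly)" by (simp add: one_pCons)
  show ?case using Suc by (simp add: algebra_simps q)
qed

lemma hpoly_mult: "[:1, -1:] * hpoly a b = [:0,1:] ^ a - [:0,1:] ^ b"
  unfolding hpoly_def right_diff_distrib geom_poly by simp

lemma hpoly_1: "poly (hpoly a b) 1 = int b - int a"
  unfolding hpoly_def by (simp add: poly_sum)



theorem proposition4p3:
  fixes V :: "'v set" and E :: "'e set" and ends :: "'e \<Rightarrow> 'v \<times> 'v" and e f :: 'e
  assumes "finite V" and "finite E"
    and "\<forall>g\<in>E. fst (ends g) \<in> V \<and> snd (ends g) \<in> V"
    and "e \<in> E" and "f \<in> E" and "e \<noteq> f"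
  shows "Poly_Mapping.lookup (Mpoly_at1 V E ends e f) (mexp (E - {e, f}))
           = int (card {F. F \<subseteq> E - {e, f} \<and> paracel V E ends e f F})"
proof -
  note finV = assms(1) and finE = assms(2) and ends = assms(3) and ef = assms(4-6)
  define E' where "E' = E - {e, f}"
  define P where "P = Pow E'"
  define k where "k = ncomp V ends"
  define q :: "int poly" where "q = [:0, 1:]"
  define m0 :: "'e \<Rightarrow>\<^sub>0 nat" where "m0 = mexp {e, f}"
  define a where "a = (\<lambda>A B. k (A \<union> {e}) + k (B \<union> {f}))"
  define b where "b = (\<lambda>A B. k (A \<union> {e, f}) + k (B \<union> {}))"
  define M0 :: "'e xpoly" where "M0 = (\<Sum>A\<in>P. \<Sum>B\<in>P. Poly_Mapping.single (mexp A + mexp B) (hpoly (a A B) (b A B)))"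
  have finP: "finite P" unfolding P_def E'_def using finE by simp
  have finsub: "\<And>A. A \<in> P \<Longrightarrow> finite A" unfolding P_def E'_def using finE finite_subset by blast
  have me: "mexp {e} + mexp {f} = m0" unfolding m0_def mexp_def using ef by simp
  have me0: "mexp {e, f} + mexp {} = m0" unfolding m0_def mexp_def by simp
  have s1: "E - ({e} \<union> {f}) = E'" "E - ({f} \<union> {e}) = E'" "E - ({e, f} \<union> {}) = E'" "E - ({} \<union> {e, f}) = E'"
    unfolding E'_def by auto
  have T1: "Tpoly V E ends {e} {f} = (\<Sum>A\<in>P. Poly_Mapping.single (mexp {e} + mexp A) (q ^ k (A \<union> {e})))"
    using Tpoly_gen[of E "{e}" "{f}" V ends] finE ef unfolding s1 P_def q_def k_def by simp
  have T2: "Tpoly V E ends {f} {e} = (\<Sum>B\<in>P. Poly_Mapping.single (mexp {f} + mexp B) (q ^ k (B \<union> {f})))"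
    using Tpoly_gen[of E "{f}" "{e}" V ends] finE ef unfolding s1 P_def q_def k_def by simp
  have T3: "Tpoly V E ends {e, f} {} = (\<Sum>A\<in>P. Poly_Mapping.single (mexp {e, f} + mexp A) (q ^ k (A \<union> {e, f})))"
    using Tpoly_gen[of E "{e, f}" "{}" V ends] finE ef unfolding s1 P_def q_def k_def by simp
  have T4: "Tpoly V E ends {} {e, f} = (\<Sum>B\<in>P. Poly_Mapping.single (mexp {} + mexp B) (q ^ k (B \<union> {})))"
    using Tpoly_gen[of E "{}" "{e, f}" V ends] finE ef unfolding s1 P_def q_def k_def by simp
  have P12: "Tpoly V E ends {e} {f} * Tpoly V E ends {f} {e} =
     (\<Sum>A\<in>P. \<Sum>B\<in>P. Poly_Mapping.single (m0 + (mexp A + mexp B)) (q ^ a A B))"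
    unfolding T1 T2 sum_product a_def
    by (intro sum.cong refl) (simp add: mult_single power_add me[symmetric] algebra_simps)
  have P34: "Tpoly V E ends {e, f} {} * Tpoly V E ends {} {e, f} =
     (\<Sum>A\<in>P. \<Sum>B\<in>P. Poly_Mapping.single (m0 + (mexp A + mexp B)) (q ^ b A B))"
    unfolding T3 T4 sum_product b_def
    by (intro sum.cong refl) (simp add: mult_single power_add me0[symmetric] algebra_simps)
  have D: "Tpoly V E ends {e} {f} * Tpoly V E ends {f} {e} - Tpoly V E ends {e, f} {} * Tpoly V E ends {} {e, f}
     = Poly_Mapping.single m0 [:1, -1:] * M0"
    unfolding P12 P34 M0_def sum_subtractf[symmetric] sum_distrib_left
    by (intro sum.cong refl) (simp only: mult_single hpoly_mult single_diff q_def)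
  have Meq: "Mpoly V E ends e f = M0"
    unfolding Mpoly_def m0_def[symmetric]
  proof (rule the_equality)
    show "Poly_Mapping.single m0 [:1, -1:] * M0 = Tpoly V E ends {e} {f} * Tpoly V E ends {f} {e} - Tpoly V E ends {e, f} {} * Tpoly V E ends {} {e, f}"
      using D by simp
  next
    fix M assume "Poly_Mapping.single m0 [:1, -1:] * M = Tpoly V E ends {e} {f} * Tpoly V E ends {f} {e} - Tpoly V E ends {e, f} {} * Tpoly V E ends {} {e, f}"
    then have "Poly_Mapping.single m0 [:1, -1:] * M = Poly_Mapping.single m0 [:1, -1:] * M0" using D by simp
    then show "M = M0" by (rule single_mult_cancel[rotated]) simp
  qed
  have L1: "Poly_Mapping.lookup (Mpoly_at1 V E ends e f) (mexp E') =
      (\<Sum>A\<in>P. \<Sum>B\<in>P. if mexp A + mexp B = mexp E' then int (b A B) - int (a A B) else 0)"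
    unfolding Mpoly_at1_def Meq
    by (simp add: lookup_map0 M0_def lookup_sum lookup_single when_def poly_sum if_distrib hpoly_1 cong: if_cong)
      (intro sum.cong refl, simp add: hpoly_1)
  have key: "mexp A + mexp B = mexp E' \<longleftrightarrow> B = E' - A" if AB: "A \<in> P" "B \<in> P" for A B
  proof
    assume h: "mexp A + mexp B = mexp E'"
    have fE': "finite E'" using finP unfolding P_def by simp
    have "\<And>g. (if g \<in> A then 1 else 0) + (if g \<in> B then 1 else 0) = (if g \<in> E' then 1 else (0::nat))"
      using arg_cong[OF h, of "\<lambda>p. Poly_Mapping.lookup p g" for g]
      by (simp add: lookup_add lookup_mexp finsub[OF AB(1)] finsub[OF AB(2)] fE')
    note hg = this
    show "B = E' - A"
    proof (intro set_eqI)
      fix g show "g \<in> B \<longleftrightarrow> g \<in> E' - A" using hg[of g] by (auto split: if_splits)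
    qed
  next
    assume "B = E' - A"
    moreover have "A \<subseteq> E'" using AB unfolding P_def by auto
    moreover have "finite E'" using finP unfolding P_def by simp
    ultimately show "mexp A + mexp B = mexp E'"
    proof -
      assume h: "B = E' - A" "A \<subseteq> E'" "finite E'"
      have "E' - A \<union> A = E'" using h(2) by blast
      moreover have "mexp (E' - A \<union> A) = mexp A + mexp (E' - A)"
        using mexp_union[of A "E' - A"] finsub[OF AB(1)] h(3) by blast
      ultimately show ?thesis using h(1) by simp
    qed
  qed
  define t where "t = (\<lambda>A B. int (b A B) - int (a A B))"
  have L2: "(\<Sum>B\<in>P. if mexp A + mexp B = mexp E' then t A B else 0) = t A (E' - A)" if A: "A \<in> P" for A
  proof -
    have "(\<Sum>B\<in>P. if mexp A + mexp B = mexp E' then t A B else 0) = (\<Sum>B\<in>P. if B = E' - A then t A B else 0)"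
      using key[OF A] by (intro sum.cong refl) simp
    also have "\<dots> = t A (E' - A)" using finP unfolding P_def by simp
    finally show ?thesis .
  qed
  define g1 where "g1 = (\<lambda>A. int (k (insert e (insert f A))) - int (k (insert e A)))"
  define g2 where "g2 = (\<lambda>H. int (k H) - int (k (insert f H)))"
  have tt: "t A (E' - A) = g1 A + g2 (E' - A)" for A
    unfolding t_def a_def b_def g1_def g2_def by (simp add: insert_commute)
  have reidx: "(\<Sum>A\<in>P. g2 (E' - A)) = (\<Sum>H\<in>P. g2 H)"
    by (rule sum.reindex_bij_witness[of _ "\<lambda>A. E' - A" "\<lambda>A. E' - A"]) (auto simp: P_def)
  have Vs: "fst (ends e) \<in> V" "snd (ends e) \<in> V" "fst (ends f) \<in> V" "snd (ends f) \<in> V"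
    using ends ef by auto
  have trm: "g1 H + g2 H = (if paracel V E ends e f H then 1 else 0)" if H: "H \<in> P" for H
    using paracel_term[of V ends e f H E, OF finV Vs] H unfolding g1_def g2_def k_def P_def E'_def by simp
  have "Poly_Mapping.lookup (Mpoly_at1 V E ends e f) (mexp E') = (\<Sum>A\<in>P. t A (E' - A))"
    unfolding L1 using L2[unfolded t_def] by (intro sum.cong refl) (simp add: t_def)
  also have "\<dots> = (\<Sum>H\<in>P. g1 H + g2 H)"
    unfolding tt sum.distrib reidx ..
  also have "\<dots> = (\<Sum>H\<in>P. if paracel V E ends e f H then 1 else 0)"
    using trm by (intro sum.cong refl) simp
  also have "\<dots> = int (card {H\<in>P. paracel V E ends e f H})"
    using finP by (simp add: sum.inter_filter[symmetric])
  also have "{H\<in>P. paracel V E ends e f H} = {F. F \<subseteq> E - {e, f} \<and> paracel V E ends e f F}"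
    unfolding P_def E'_def by auto
  finally show ?thesis unfolding E'_def .
qed

end
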